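(* Let $\mathbf{A}$ be a structure such that there exists a retraction $r:\mathbf{A}\twoheadrightarrow\mathbf{A}^2$. Then $\operatorname{rank}(\operatorname{Pol}\mathbf{A}:\operatorname{End}\mathbf{A})=1$. More precisely, if $\epsilon:\mathbf{A}^2\hookrightarrow\mathbf{A}$ is a homomorphism with $r\circ\epsilon=1_{\mathbf{A}^2}$, then $\operatorname{Pol}\mathbf{A}$ is generated as a clone by $\operatorname{End}\mathbf{A}\cup\{\epsilon\}$, while $\operatorname{End}\mathbf{A}$ alone does not generate $\operatorname{Pol}\mathbf{A}$.
   Context: For a set $A$, $O_A^{(n)}$ is the set of functions $A^n\to A$, $O_A=\bigcup_{n\ge1}O_A^{(n)}$, projections are $e_i^n(x_1,\dots,x_n)=x_i$, and for $f\in O_A^{(n)}$, $g_1,\dots,g_n\in O_A^{(m)}$, $f\circ\langle g_1,\dots,g_n\rangle(\bar x)=f(g_1(\bar x),\dots,g_n(\bar x))$. A clone on $A$ is a subset of $O_A$ containing all projections and closed under this composition; $\langle M\rangle_{O_A}$ is the clone generated by $M\subseteq O_A$. For a structure $\mathbf{A}$, $\operatorname{Pol}\mathbf{A}$ is the clone of all homomorphisms $\mathbf{A}^n\to\mathbf{A}$ ($n\ge1$, $\mathbf{A}^n$ the direct power), and $\operatorname{End}\mathbf{A}$ is its unary part (the endomorphisms). For a clone $F$ and $M\subseteq F$, the relative rank $\operatorname{rank}(F:M)$ is the least cardinality of a set $N\subseteq F$ with $\langle M\cup N\rangle_{O_A}=F$. A homomorphism $r:\mathbf{A}\to\mathbf{B}$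 is a retraction if some homomorphism $\iota:\mathbf{B}\to\mathbf{A}$ (a section) satisfies $r\circ\iota=1_{\mathbf{B}}$. *)

theory Defs
  imports Main "HOL-Library.Extended_Nat"
begin

record ('a, 'r, 'f) struct =
  carrier :: "'a set"
  rar :: "'r \<Rightarrow> nat"
  rel_of :: "'r \<Rightarrow> 'a list set"
  far :: "'f \<Rightarrow> nat"
  fun_of :: "'f \<Rightarrow> 'a list \<Rightarrow> 'a"

definition tuples :: "'a set \<Rightarrow> nat \<Rightarrow> 'a list set" where
  "tuples S n = {xs. length xs = n \<and> set xs \<subseteq> S}"

definition wf_struct :: "('a, 'r, 'f) struct \<Rightarrow> bool" where
  "wf_struct A \<longleftrightarrow>
     (\<forall>R. rel_of A R \<subseteq> tuples (carrier A) (rar A R)) \<and>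
     (\<forall>F. \<forall>xs \<in> tuples (carrier A) (far A F). fun_of A F xs \<in> carrier A)"

definition power :: "('a, 'r, 'f) struct \<Rightarrow> nat \<Rightarrow> ('a list, 'r, 'f) struct" where
  "power A n = \<lparr> carrier = tuples (carrier A) n,
      rar = rar A,
      rel_of = (\<lambda>R. {ts. length ts = rar A R \<and> (\<forall>t\<in>set ts. t \<in> tuples (carrier A) n) \<and>
                        (\<forall>i<n. map (\<lambda>t. t ! i) ts \<in> rel_of A R)}),
      far = far A,
      fun_of = (\<lambda>F ts. map (\<lambda>i. fun_of A F (map (\<lambda>t. t ! i) ts)) [0..<n]) \<rparr>"

definition hom :: "('a, 'r, 'f) struct \<Rightarrow> ('b, 'r, 'f) struct \<Rightarrow> ('a \<Rightarrow> 'b) \<Rightarrow> bool" where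
  "hom A B h \<longleftrightarrow>
     (\<forall>x \<in> carrier A. h x \<in> carrier B) \<and>
     (\<forall>R. \<forall>xs \<in> rel_of A R. map h xs \<in> rel_of B R) \<and>
     (\<forall>F. \<forall>xs \<in> tuples (carrier A) (far A F). h (fun_of A F xs) = fun_of B F (map h xs))"

text \<open>An n-ary operation on S is a pair (n, f), f normalised to be undefined
  outside S^n, so that equality of operations is extensional on S^n.\<close>
type_synonym 'a operation = "nat \<times> ('a list \<Rightarrow> 'a)"

definition ops_n :: "'a set \<Rightarrow> nat \<Rightarrow> 'a operation set" where
  "ops_n S n = {(n, f) | f. (\<forall>xs \<in> tuples S n. f xs \<in> S) \<and>
                            (\<forall>xs. xs \<notin> tuples S n \<longrightarrow> f xs = undefined)}"

definition ops :: "'a set \<Rightarrow> 'a operation set" where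
  "ops S = (\<Union>n\<in>{1..}. ops_n S n)"

definition restrict_op :: "'a set \<Rightarrow> nat \<Rightarrow> ('a list \<Rightarrow> 'a) \<Rightarrow> 'a operation" where
  "restrict_op S n f = (n, \<lambda>xs. if xs \<in> tuples S n then f xs else undefined)"

text \<open>Projection e_(i+1)^n (0-indexed coordinate i).\<close>
definition proj :: "'a set \<Rightarrow> nat \<Rightarrow> nat \<Rightarrow> 'a operation" where
  "proj S n i = restrict_op S n (\<lambda>xs. xs ! i)"

definition compose :: "'a set \<Rightarrow> 'a operation \<Rightarrow> 'a operation list \<Rightarrow> nat \<Rightarrow> 'a operation" where
  "compose S f gs m = restrict_op S m (\<lambda>xs. snd f (map (\<lambda>g. snd g xs) gs))"

definition is_clone :: "'a set \<Rightarrow> 'a operation set \<Rightarrow> bool" where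
  "is_clone S C \<longleftrightarrow> C \<subseteq> ops S \<and>
     (\<forall>n i. 1 \<le> n \<longrightarrow> i < n \<longrightarrow> proj S n i \<in> C) \<and>
     (\<forall>f gs m. f \<in> C \<longrightarrow> length gs = fst f \<longrightarrow> set gs \<subseteq> C \<longrightarrow>
        (\<forall>g \<in> set gs. fst g = m) \<longrightarrow> compose S f gs m \<in> C)"

definition clone_gen :: "'a set \<Rightarrow> 'a operation set \<Rightarrow> 'a operation set" where
  "clone_gen S M = \<Inter>{C. is_clone S C \<and> M \<subseteq> C}"

definition Pol :: "('a, 'r, 'f) struct \<Rightarrow> 'a operation set" where
  "Pol A = {(n, f) \<in> ops (carrier A). hom (power A n) A f}"

definition End :: "('a, 'r, 'f) struct \<Rightarrow> 'a operation set" where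
  "End A = {p \<in> Pol A. fst p = 1}"

text \<open>Relative rank; infinite cardinals are collapsed to \<infinity>.\<close>
definition rel_rank :: "'a set \<Rightarrow> 'a operation set \<Rightarrow> 'a operation set \<Rightarrow> enat" where
  "rel_rank S F M =
     (if \<exists>N. N \<subseteq> F \<and> finite N \<and> clone_gen S (M \<union> N) = F
      then enat (LEAST k. \<exists>N. N \<subseteq> F \<and> finite N \<and> card N = k \<and> clone_gen S (M \<union> N) = F)
      else \<infinity>)"

end

theory Submission
  imports Defs
begin

lemma power_simps[simp]:
  "carrier (power A n) = tuples (carrier A) n"
  "rar (power A n) = rar A"
  "far (power A n) = far A"
  "rel_of (power A n) R = {ts. length ts = rar A R \<and> (\<forall>t\<in>set ts. t \<in> tuples (carrier A) n) \<and>
                        (\<forall>i<n. map (\<lambda>t. t ! i) ts \<in> rel_of A R)}"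
  "fun_of (power A n) F ts = map (\<lambda>i. fun_of A F (map (\<lambda>t. t ! i) ts)) [0..<n]"
  by (simp_all add: power_def)

lemma tuples_nth: "xs \<in> tuples S n \<Longrightarrow> i < n \<Longrightarrow> xs ! i \<in> S"
  by (auto simp: tuples_def)

lemma column_tuples:
  assumes "ts \<in> tuples (tuples S n) k" "i < n"
  shows "map (\<lambda>t. t ! i) ts \<in> tuples S k"
proof -
  have "\<forall>t\<in>set ts. t ! i \<in> S" using assms unfolding tuples_def by (auto intro: nth_mem)
  then show ?thesis using assms by (auto simp: tuples_def)
qed

lemma power_fun_carrier:
  assumes "wf_struct A" "ts \<in> tuples (tuples (carrier A) n) (far A F)"
  shows "fun_of (power A n) F ts \<in> tuples (carrier A) n"
proof -
  have "\<forall>i<n. fun_of A F (map (\<lambda>t. t ! i) ts) \<in> carrier A"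
    using assms column_tuples unfolding wf_struct_def by blast
  then show ?thesis by (auto simp: tuples_def)
qed

lemma hom_comp:
  assumes g: "hom A B g" and h: "hom B C h" and fa: "far B = far A"
  shows "hom A C (\<lambda>x. h (g x))"
  unfolding hom_def
proof (intro conjI ballI allI)
  fix x assume "x \<in> carrier A"
  then show "h (g x) \<in> carrier C" using g h by (auto simp: hom_def)
next
  fix R xs assume "xs \<in> rel_of A R"
  then have "map g xs \<in> rel_of B R" using g unfolding hom_def by blast
  then have "map h (map g xs) \<in> rel_of C R" using h unfolding hom_def by blast
  then show "map (\<lambda>x. h (g x)) xs \<in> rel_of C R" by (simp add: o_def)
next
  fix F xs assume xs: "xs \<in> tuples (carrier A) (far A F)"
  then have m: "map g xs \<in> tuples (carrier B) (far B F)"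
    using g fa unfolding hom_def tuples_def by auto
  have "h (g (fun_of A F xs)) = h (fun_of B F (map g xs))" using g xs by (auto simp: hom_def)
  also have "\<dots> = fun_of C F (map h (map g xs))" using h m by (auto simp: hom_def)
  finally show "h (g (fun_of A F xs)) = fun_of C F (map (\<lambda>x. h (g x)) xs)" by (simp add: o_def)
qed

lemma hom_cong_power:
  assumes "wf_struct A" "\<And>x. x \<in> tuples (carrier A) n \<Longrightarrow> h x = h' x" "hom (power A n) B h"
  shows "hom (power A n) B h'"
  unfolding hom_def
proof (intro conjI ballI allI)
  fix x assume "x \<in> carrier (power A n)"
  then show "h' x \<in> carrier B" using assms(2,3) by (auto simp: hom_def)
next
  fix R xs assume xs: "xs \<in> rel_of (power A n) R"
  then have "map h xs = map h' xs" using assms(2) by (auto intro!: map_cong)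
  moreover have "map h xs \<in> rel_of B R" using xs assms(3) unfolding hom_def by blast
  ultimately show "map h' xs \<in> rel_of B R" by metis
next
  fix F xs assume xs: "xs \<in> tuples (carrier (power A n)) (far (power A n) F)"
  then have xs': "xs \<in> tuples (tuples (carrier A) n) (far A F)" by simp
  have "set xs \<subseteq> tuples (carrier A) n" using xs' by (simp add: tuples_def)
  then have e1: "map h xs = map h' xs" using assms(2) by (auto intro!: map_cong)
  have e2: "h (fun_of (power A n) F xs) = h' (fun_of (power A n) F xs)"
    using power_fun_carrier[OF assms(1) xs'] assms(2) by blast
  have "h (fun_of (power A n) F xs) = fun_of B F (map h xs)"
    using assms(3) xs unfolding hom_def by blast
  then show "h' (fun_of (power A n) F xs) = fun_of B F (map h' xs)"
    using e1 e2 by simp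
qed

lemma proj_hom:
  assumes "i < n"
  shows "hom (power A n) A (\<lambda>t. t ! i)"
  unfolding hom_def using assms by (auto simp: tuples_def intro: nth_mem)

lemma hom_into_power:
  assumes wf: "wf_struct A"
    and car: "\<And>x. x \<in> tuples (carrier A) n \<Longrightarrow> h x \<in> tuples (carrier A) m"
    and co: "\<And>i. i < m \<Longrightarrow> hom (power A n) A (\<lambda>x. h x ! i)"
  shows "hom (power A n) (power A m) h"
  unfolding hom_def
proof (intro conjI ballI allI)
  fix x assume "x \<in> carrier (power A n)" then show "h x \<in> carrier (power A m)" using car by simp
next
  fix R xs assume xs: "xs \<in> rel_of (power A n) R"
  have "map (\<lambda>t. t ! i) (map h xs) \<in> rel_of A R" if "i < m" for i
  proof -
    have "map (\<lambda>x. h x ! i) xs \<in> rel_of A R"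
      using co[OF that] xs unfolding hom_def by blast
    then show ?thesis by (simp add: o_def)
  qed
  then show "map h xs \<in> rel_of (power A m) R" using xs car by auto
next
  fix F xs assume xs: "xs \<in> tuples (carrier (power A n)) (far (power A n) F)"
  then have xs': "xs \<in> tuples (tuples (carrier A) n) (far A F)" by simp
  have hc: "h (fun_of (power A n) F xs) \<in> tuples (carrier A) m"
    using car power_fun_carrier[OF wf xs'] by blast
  show "h (fun_of (power A n) F xs) = fun_of (power A m) F (map h xs)"
  proof (rule nth_equalityI)
    show "length (h (fun_of (power A n) F xs)) = length (fun_of (power A m) F (map h xs))"
      using hc by (simp add: tuples_def)
    fix i assume "i < length (h (fun_of (power A n) F xs))"
    then have i: "i < m" using hc by (simp add: tuples_def)
    have "h (fun_of (power A n) F xs) ! i = fun_of A F (map (\<lambda>x. h x ! i) xs)"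
      using co[OF i] xs unfolding hom_def by blast
    then show "h (fun_of (power A n) F xs) ! i = fun_of (power A m) F (map h xs) ! i"
      using i by (simp add: o_def)
  qed
qed

lemma Pol_iff: "p \<in> Pol A \<longleftrightarrow> p \<in> ops (carrier A) \<and> hom (power A (fst p)) A (snd p)"
  by (cases p) (simp add: Pol_def)

lemma ops_iff: "p \<in> ops S \<longleftrightarrow> fst p \<ge> 1 \<and> (\<forall>xs\<in>tuples S (fst p). snd p xs \<in> S) \<and>
   (\<forall>xs. xs \<notin> tuples S (fst p) \<longrightarrow> snd p xs = undefined)"
  by (cases p) (auto simp: ops_def ops_n_def)

lemma restrict_ops:
  assumes "n \<ge> 1" "\<And>xs. xs \<in> tuples S n \<Longrightarrow> f xs \<in> S"
  shows "restrict_op S n f \<in> ops S"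
  using assms by (simp add: ops_iff restrict_op_def)

lemma snd_restrict[simp]: "xs \<in> tuples S n \<Longrightarrow> snd (restrict_op S n f) xs = f xs"
  by (simp add: restrict_op_def)

lemma fst_restrict[simp]: "fst (restrict_op S n f) = n" by (simp add: restrict_op_def)

lemma restrict_Pol:
  assumes wf: "wf_struct A" and n: "n \<ge> 1" and h: "hom (power A n) A f"
  shows "restrict_op (carrier A) n f \<in> Pol A"
proof -
  have c: "\<And>xs. xs \<in> tuples (carrier A) n \<Longrightarrow> f xs \<in> carrier A"
    using h by (auto simp: hom_def)
  have "hom (power A n) A (snd (restrict_op (carrier A) n f))"
    by (rule hom_cong_power[OF wf _ h]) simp
  then show ?thesis using restrict_ops[OF n c] by (simp add: Pol_iff)
qed

lemma restrict_eq:
  assumes "p \<in> ops S" "\<And>xs. xs \<in> tuples S (fst p) \<Longrightarrow> h xs = snd p xs"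
  shows "restrict_op S (fst p) h = p"
  using assms by (cases p) (auto simp: restrict_op_def ops_iff fun_eq_iff)

lemma Pol_clone:
  assumes wf: "wf_struct A"
  shows "is_clone (carrier A) (Pol A)"
  unfolding is_clone_def
proof (intro conjI allI impI)
  show "Pol A \<subseteq> ops (carrier A)" by (auto simp: Pol_iff)
next
  fix n i :: nat assume "1 \<le> n" "i < n"
  then show "proj (carrier A) n i \<in> Pol A"
    unfolding proj_def using restrict_Pol[OF wf _ proj_hom] by blast
next
  fix f gs m
  assume f: "f \<in> Pol A" and len: "length gs = fst f" and gs: "set gs \<subseteq> Pol A"
    and ar: "\<forall>g\<in>set gs. fst g = m"
  obtain n fo where fe: "f = (n, fo)" by (cases f)
  have n1: "n \<ge> 1" using f fe by (simp add: Pol_iff ops_iff)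
  then have "gs \<noteq> []" using len fe by auto
  then have "hd gs \<in> set gs" by simp
  then have m1: "m \<ge> 1" using gs ar by (auto simp: Pol_iff ops_iff)
  define H where "H xs = map (\<lambda>g. snd g xs) gs" for xs
  have gS: "snd g xs \<in> carrier A" if "g \<in> set gs" "xs \<in> tuples (carrier A) m" for g xs
    using that gs ar by (auto simp: Pol_iff ops_iff)
  have Hh: "hom (power A m) (power A n) H"
  proof (rule hom_into_power[OF wf])
    fix x assume "x \<in> tuples (carrier A) m"
    then show "H x \<in> tuples (carrier A) n" using gS len fe by (auto simp: H_def tuples_def)
  next
    fix i assume i: "i < n"
    then have gi: "gs ! i \<in> Pol A" "fst (gs ! i) = m" using gs ar len fe nth_mem by auto
    have "hom (power A m) A (snd (gs ! i))" using gi by (simp add: Pol_iff)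
    then show "hom (power A m) A (\<lambda>x. H x ! i)"
      using i len fe by (simp add: H_def)
  qed
  have fh: "hom (power A n) A fo" using f fe by (simp add: Pol_iff)
  have "hom (power A m) A (\<lambda>x. fo (H x))" by (rule hom_comp[OF Hh fh]) simp
  then have "restrict_op (carrier A) m (\<lambda>x. fo (H x)) \<in> Pol A" using restrict_Pol[OF wf m1] by blast
  then show "compose (carrier A) f gs m \<in> Pol A" by (simp add: compose_def fe H_def)
qed

definition EU :: "'a set \<Rightarrow> 'a operation set" where
  "EU S = {p \<in> ops S. \<exists>i<fst p. \<exists>g. \<forall>xs\<in>tuples S (fst p). snd p xs = g (xs ! i)}"

lemma EU_I: "p \<in> ops S \<Longrightarrow> i < fst p \<Longrightarrow> \<forall>xs\<in>tuples S (fst p). snd p xs = g (xs ! i) \<Longrightarrow> p \<in> EU S"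
  unfolding EU_def by blast

lemma EU_clone: "is_clone S (EU S)"
  unfolding is_clone_def
proof (intro conjI allI impI)
  show "EU S \<subseteq> ops S" by (auto simp: EU_def)
next
  fix n i :: nat assume n: "1 \<le> n" and i: "i < n"
  have o: "proj S n i \<in> ops S" unfolding proj_def using n i by (auto intro!: restrict_ops tuples_nth)
  have k: "\<forall>xs\<in>tuples S (fst (proj S n i)). snd (proj S n i) xs = (\<lambda>x. x) (xs ! i)"
    by (simp add: proj_def)
  have ii: "i < fst (proj S n i)" using i by (simp add: proj_def)
  show "proj S n i \<in> EU S" by (rule EU_I[OF o ii k])
next
  fix f gs m
  assume f: "f \<in> EU S" and len: "length gs = fst f" and gs: "set gs \<subseteq> EU S"
    and ar: "\<forall>g\<in>set gs. fst g = m"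
  from f obtain i g where i: "i < fst f" and fg: "\<forall>xs\<in>tuples S (fst f). snd f xs = g (xs ! i)"
     and fo: "f \<in> ops S"
    by (auto simp: EU_def)
  have gi: "gs ! i \<in> EU S" "fst (gs ! i) = m" using i len gs ar nth_mem by auto
  from gi obtain j g' where j: "j < m" and g': "\<forall>xs\<in>tuples S m. snd (gs!i) xs = g' (xs ! j)"
    by (auto simp: EU_def)
  have m1: "m \<ge> 1" using j by simp
  have gS: "snd g0 xs \<in> S" if "g0 \<in> set gs" "xs \<in> tuples S m" for g0 xs
    using that gs ar by (auto simp: EU_def ops_iff)
  have Ht: "map (\<lambda>g. snd g xs) gs \<in> tuples S (fst f)" if "xs \<in> tuples S m" for xs
    using gS[OF _ that] len by (auto simp: tuples_def)
  have val: "snd f (map (\<lambda>g. snd g xs) gs) = g (g' (xs ! j))" if "xs \<in> tuples S m" for xs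
    using fg Ht[OF that] g' that i len by auto
  have fS: "snd f ys \<in> S" if "ys \<in> tuples S (fst f)" for ys using fo that by (simp add: ops_iff)
  have o: "restrict_op S m (\<lambda>xs. snd f (map (\<lambda>g. snd g xs) gs)) \<in> ops S"
    by (intro restrict_ops[OF m1] fS Ht)
  have k: "\<forall>xs\<in>tuples S (fst (restrict_op S m (\<lambda>xs. snd f (map (\<lambda>g. snd g xs) gs)))).
     snd (restrict_op S m (\<lambda>xs. snd f (map (\<lambda>g. snd g xs) gs))) xs
      = (\<lambda>x. g (g' x)) (xs ! j)" using val by simp
  have jj: "j < fst (restrict_op S m (\<lambda>xs. snd f (map (\<lambda>g. snd g xs) gs)))" using j by simp
  show "compose S f gs m \<in> EU S"
    unfolding compose_def by (rule EU_I[OF o jj k])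
qed

lemma End_EU: "End A \<subseteq> EU (carrier A)"
proof
  fix p assume p: "p \<in> End A"
  then have po: "p \<in> ops (carrier A)" and p1: "fst p = 1" by (auto simp: End_def Pol_iff)
  have key: "\<forall>xs\<in>tuples (carrier A) (fst p). snd p xs = (\<lambda>x. snd p [x]) (xs ! 0)"
  proof
    fix xs assume "xs \<in> tuples (carrier A) (fst p)"
    then obtain x where "xs = [x]" using p1 by (auto simp: tuples_def length_Suc_conv)
    then show "snd p xs = (\<lambda>x. snd p [x]) (xs ! 0)" by simp
  qed
  have "0 < fst p" using p1 by simp
  from EU_I[OF po this key] show "p \<in> EU (carrier A)" .
qed

lemma eps_not_EU:
  assumes r: "\<forall>p \<in> tuples (carrier A) 2. r (e p) = p"
    and ab: "a \<in> carrier A" "b \<in> carrier A" "a \<noteq> b"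
  shows "restrict_op (carrier A) 2 e \<notin> EU (carrier A)"
proof
  assume "restrict_op (carrier A) 2 e \<in> EU (carrier A)"
  then obtain i g where i: "i < 2" and g: "\<forall>xs\<in>tuples (carrier A) 2. e xs = g (xs ! i)"
    by (auto simp: EU_def)
  have t: "[a,a] \<in> tuples (carrier A) 2" "[a,b] \<in> tuples (carrier A) 2" "[b,a] \<in> tuples (carrier A) 2"
    using ab by (auto simp: tuples_def)
  show False
  proof (cases "i = 0")
    case True
    then have "e [a,a] = e [a,b]" using g t by auto
    then have "r (e [a,a]) = r (e [a,b])" by simp
    then show False using r t ab by auto
  next
    case False
    then have "i = 1" using i by simp
    then have "e [a,a] = e [b,a]" using g t by auto
    then have "r (e [a,a]) = r (e [b,a])" by simp
    then show False using r t ab by auto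
  qed
qed

lemma upto_split:
  assumes "length xs = Suc n" "n \<ge> 1"
  shows "[xs ! 0, xs ! 1] @ map (\<lambda>i. xs ! i) [2..<Suc n] = xs"
proof (rule nth_equalityI)
  show "length ([xs ! 0, xs ! 1] @ map (\<lambda>i. xs ! i) [2..<Suc n]) = length xs"
    using assms by (simp del: upt_Suc; arith)
  fix j assume "j < length ([xs ! 0, xs ! 1] @ map (\<lambda>i. xs ! i) [2..<Suc n])"
  then have j: "j < Suc n" using assms by (simp del: upt_Suc; arith)
  show "([xs ! 0, xs ! 1] @ map (\<lambda>i. xs ! i) [2..<Suc n]) ! j = xs ! j"
  proof (cases "j < 2")
    case True
    then have "j = 0 \<or> j = 1" by auto
    then show ?thesis by auto
  next
    case False
    have jj: "j - 2 < Suc n - 2" using j False by arith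
    have s2: "Suc (Suc (j - Suc (Suc 0))) = j" using False by arith
    from jj show ?thesis using False s2 by (simp add: nth_append del: upt_Suc)
  qed
qed

lemma gen_Pol:
  assumes wf: "wf_struct A" and rh: "hom A (power A 2) r"
    and eh: "hom (power A 2) A e" and re: "\<forall>p \<in> tuples (carrier A) 2. r (e p) = p"
    and C: "is_clone (carrier A) C" and EC: "End A \<subseteq> C" and eC: "restrict_op (carrier A) 2 e \<in> C"
  shows "(Suc k, fo) \<in> Pol A \<Longrightarrow> (Suc k, fo) \<in> C"
proof (induction k arbitrary: fo)
  case 0
  then show ?case using EC by (auto simp: End_def)
next
  case (Suc k)
  let ?S = "carrier A"
  define n where "n = Suc k"
  have n1: "n \<ge> 1" by (simp add: n_def)
  have fP: "(Suc n, fo) \<in> Pol A" using Suc.prems n_def by simp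
  then have fo_h: "hom (power A (Suc n)) A fo" and fo_o: "(Suc n, fo) \<in> ops ?S" by (auto simp: Pol_iff)
  define phi where "phi ys = r (hd ys) @ tl ys" for ys :: "'a list"
  have basic: "hd ys = ys ! 0 \<and> r (hd ys) \<in> tuples ?S 2 \<and> length ys = n \<and> ys \<noteq> []"
    if "ys \<in> tuples ?S n" for ys
  proof -
    have l: "length ys = n" using that by (simp add: tuples_def)
    then have ne: "ys \<noteq> []" using n1 by auto
    then have "hd ys \<in> ?S" using that by (auto simp: tuples_def)
    then have "r (hd ys) \<in> tuples ?S 2" using rh by (auto simp: hom_def)
    then show ?thesis using l ne by (simp add: hd_conv_nth)
  qed
  have phi_t: "phi ys \<in> tuples ?S (Suc n)" if "ys \<in> tuples ?S n" for ys
  proof -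
    have b: "r (hd ys) \<in> tuples ?S 2" "length ys = n" "ys \<noteq> []" using basic[OF that] by auto
    have "set (tl ys) \<subseteq> ?S" using that b(3) by (auto simp: tuples_def dest: list.set_sel(2))
    then show ?thesis using b n1 by (auto simp: phi_def tuples_def)
  qed
  have phi_h: "hom (power A n) (power A (Suc n)) phi"
  proof (rule hom_into_power[OF wf phi_t])
    fix i assume i: "i < Suc n"
    show "hom (power A n) A (\<lambda>x. phi x ! i)"
    proof (cases "i < 2")
      case True
      have h0: "hom (power A n) A (\<lambda>t. t ! 0)" using proj_hom[of 0 n] n1 by simp
      have h1: "hom (power A n) (power A 2) (\<lambda>t. r (t ! 0))" by (rule hom_comp[OF h0 rh]) simp
      have h2: "hom (power A 2) A (\<lambda>u. u ! i)" using proj_hom True by blast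
      have h3: "hom (power A n) A (\<lambda>t. r (t ! 0) ! i)" by (rule hom_comp[OF h1 h2]) simp
      show ?thesis
      proof (rule hom_cong_power[OF wf _ h3])
        fix x assume x: "x \<in> tuples ?S n"
        then have "hd x = x ! 0" "length (r (hd x)) = 2" using basic[OF x] by (auto simp: tuples_def)
        then show "r (x ! 0) ! i = phi x ! i" using True by (simp add: phi_def nth_append)
      qed
    next
      case False
      have h3: "hom (power A n) A (\<lambda>t. t ! (i - 1))" by (rule proj_hom) (use i False in arith)
      show ?thesis
      proof (rule hom_cong_power[OF wf _ h3])
        fix x assume x: "x \<in> tuples ?S n"
        then have "length (r (hd x)) = 2" "x \<noteq> []" using basic[OF x] by (auto simp: tuples_def)
        moreover have ii: "i - 1 = Suc (i - 2)" using False by arith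
        moreover have "x ! (i - 1) = tl x ! (i - 2)" using \<open>x \<noteq> []\<close> ii by (cases x) simp_all
        ultimately show "x ! (i - 1) = phi x ! i" using False by (simp add: phi_def nth_append)
      qed
    qed
  qed
  define f' where "f' = restrict_op ?S n (\<lambda>ys. fo (phi ys))"
  have "hom (power A n) A (\<lambda>ys. fo (phi ys))" by (rule hom_comp[OF phi_h fo_h]) simp
  then have f'P: "f' \<in> Pol A" unfolding f'_def using restrict_Pol[OF wf n1] by blast
  have f'e: "f' = (n, snd f')" by (simp add: f'_def restrict_op_def)
  have f'C: "f' \<in> C" using Suc.IH[of "snd f'"] f'P f'e n_def by simp
  have Cproj: "proj ?S (Suc n) i \<in> C" if "i < Suc n" for i using C that unfolding is_clone_def by auto
  have Ccomp: "compose ?S f gs m \<in> C" if "f \<in> C" "length gs = fst f" "set gs \<subseteq> C" "\<forall>g\<in>set gs. fst g = m"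
    for f gs m using C that unfolding is_clone_def by blast
  define ce where "ce = compose ?S (restrict_op ?S 2 e) [proj ?S (Suc n) 0, proj ?S (Suc n) 1] (Suc n)"
  have p0: "proj ?S (Suc n) 0 \<in> C" "proj ?S (Suc n) 1 \<in> C" using Cproj n1 by auto
  have ceC: "ce \<in> C" unfolding ce_def
    by (rule Ccomp[OF eC]) (use p0 in \<open>auto simp: proj_def\<close>)
  define gs where "gs = ce # map (\<lambda>i. proj ?S (Suc n) i) [2..<Suc n]"
  have gsC: "set gs \<subseteq> C" unfolding gs_def using ceC Cproj by auto
  have gsl: "length gs = fst f'" using n1 by (simp add: gs_def f'_def del: upt_Suc; arith)
  have gsa: "\<forall>g\<in>set gs. fst g = Suc n" by (auto simp: gs_def ce_def compose_def proj_def)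
  have cC: "compose ?S f' gs (Suc n) \<in> C" by (rule Ccomp[OF f'C gsl gsC gsa])
  have "compose ?S f' gs (Suc n) = (Suc n, fo)"
    unfolding compose_def
  proof -
    have "restrict_op ?S (fst (Suc n, fo)) (\<lambda>xs. snd f' (map (\<lambda>g. snd g xs) gs)) = (Suc n, fo)"
    proof (rule restrict_eq[OF fo_o])
      fix xs assume "xs \<in> tuples ?S (fst (Suc n, fo))"
      then have xs: "xs \<in> tuples ?S (Suc n)" by simp
      then have lx: "length xs = Suc n" by (simp add: tuples_def)
      have x01: "[xs ! 0, xs ! 1] \<in> tuples ?S 2" using xs n1 by (auto simp: tuples_def intro: nth_mem)
      have eS: "e [xs ! 0, xs ! 1] \<in> ?S" using eh x01 by (auto simp: hom_def)
      have L: "map (\<lambda>g. snd g xs) gs = e [xs ! 0, xs ! 1] # map (\<lambda>i. xs ! i) [2..<Suc n]"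
        using xs x01 by (simp add: gs_def ce_def compose_def proj_def)
      have Lt: "e [xs ! 0, xs ! 1] # map (\<lambda>i. xs ! i) [2..<Suc n] \<in> tuples ?S n"
        using eS xs n1 by (auto simp: tuples_def intro: nth_mem)
      have "snd f' (map (\<lambda>g. snd g xs) gs) = fo (phi (e [xs ! 0, xs ! 1] # map (\<lambda>i. xs ! i) [2..<Suc n]))"
        unfolding L f'_def using Lt by simp
      also have "\<dots> = fo ([xs ! 0, xs ! 1] @ map (\<lambda>i. xs ! i) [2..<Suc n])"
        using re x01 by (simp add: phi_def)
      also have "\<dots> = fo xs" using upto_split[OF lx n1] by simp
      finally show "snd f' (map (\<lambda>g. snd g xs) gs) = snd (Suc n, fo) xs" by simp
    qed
    then show "restrict_op ?S (Suc n) (\<lambda>xs. snd f' (map (\<lambda>g. snd g xs) gs)) = (Suc n, fo)" by simp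
  qed
  then show ?case using cC n_def by simp
qed

theorem proposition5p2:
  fixes A :: "('a, 'r, 'f) struct" and r :: "'a \<Rightarrow> 'a list"
  assumes "wf_struct A"
    and "\<exists>a \<in> carrier A. \<exists>b \<in> carrier A. a \<noteq> b"
    and "hom A (power A 2) r"
    and "\<exists>e. hom (power A 2) A e \<and> (\<forall>p \<in> carrier (power A 2). r (e p) = p)"
  shows "rel_rank (carrier A) (Pol A) (End A) = 1
    \<and> (\<forall>e. hom (power A 2) A e \<and> (\<forall>p \<in> carrier (power A 2). r (e p) = p) \<longrightarrow>
          clone_gen (carrier A) (End A \<union> {restrict_op (carrier A) 2 e}) = Pol A)
    \<and> clone_gen (carrier A) (End A) \<noteq> Pol A"
proof -
  let ?S = "carrier A"
  note wf = assms(1)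
  from assms(2) obtain a b where ab: "a \<in> ?S" "b \<in> ?S" "a \<noteq> b" by blast
  have gen: "clone_gen ?S (End A \<union> {restrict_op ?S 2 e}) = Pol A"
    if eh: "hom (power A 2) A e" and re: "\<forall>p\<in>carrier (power A 2). r (e p) = p" for e
  proof
    have eP: "restrict_op ?S 2 e \<in> Pol A" using restrict_Pol[OF wf _ eh] by simp
    show "clone_gen ?S (End A \<union> {restrict_op ?S 2 e}) \<subseteq> Pol A"
      unfolding clone_gen_def
      by (rule Inter_lower) (use Pol_clone[OF wf] eP in \<open>auto simp: End_def\<close>)
    show "Pol A \<subseteq> clone_gen ?S (End A \<union> {restrict_op ?S 2 e})"
    proof
      fix p assume p: "p \<in> Pol A"
      obtain n fo where pe: "p = (n, fo)" by (cases p)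
      have "n \<ge> 1" using p pe by (simp add: Pol_iff ops_iff)
      then obtain k where nk: "n = Suc k" by (cases n) auto
      show "p \<in> clone_gen ?S (End A \<union> {restrict_op ?S 2 e})"
        unfolding clone_gen_def
      proof (rule InterI)
        fix C assume "C \<in> {C. is_clone ?S C \<and> End A \<union> {restrict_op ?S 2 e} \<subseteq> C}"
        then have C: "is_clone ?S C" "End A \<subseteq> C" "restrict_op ?S 2 e \<in> C" by auto
        have re': "\<forall>p \<in> tuples ?S 2. r (e p) = p" using re by simp
        show "p \<in> C" using gen_Pol[OF wf assms(3) eh re' C] p pe nk by simp
      qed
    qed
  qed
  obtain e0 where e0: "hom (power A 2) A e0" "\<forall>p\<in>carrier (power A 2). r (e0 p) = p"
    using assms(4) by blast
  have ne: "clone_gen ?S (End A) \<noteq> Pol A"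
  proof
    assume eq: "clone_gen ?S (End A) = Pol A"
    have "clone_gen ?S (End A) \<subseteq> EU ?S" unfolding clone_gen_def
      by (rule Inter_lower) (use EU_clone End_EU in auto)
    moreover have "restrict_op ?S 2 e0 \<in> Pol A" using restrict_Pol[OF wf _ e0(1)] by simp
    moreover have "restrict_op ?S 2 e0 \<notin> EU ?S"
      by (rule eps_not_EU[OF _ ab]) (use e0(2) in simp)
    ultimately show False using eq by auto
  qed
  have rank: "rel_rank ?S (Pol A) (End A) = 1"
  proof -
    let ?P = "\<lambda>k. \<exists>N. N \<subseteq> Pol A \<and> finite N \<and> card N = k \<and> clone_gen ?S (End A \<union> N) = Pol A"
    have eP: "restrict_op ?S 2 e0 \<in> Pol A" using restrict_Pol[OF wf _ e0(1)] by simp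
    have P1: "?P 1" using gen[OF e0] eP by (intro exI[of _ "{restrict_op ?S 2 e0}"]) auto
    have ex: "\<exists>N. N \<subseteq> Pol A \<and> finite N \<and> clone_gen ?S (End A \<union> N) = Pol A" using P1 by blast
    have "(LEAST k. ?P k) = 1"
    proof (rule Least_equality)
      show "?P 1" by (rule P1)
      fix k assume "?P k"
      then obtain N where N: "finite N" "card N = k" "clone_gen ?S (End A \<union> N) = Pol A" by blast
      show "1 \<le> k"
      proof (rule ccontr)
        assume "\<not> 1 \<le> k" then have "card N = 0" using N by simp
        then have "N = {}" using N(1) by simp
        then show False using N ne by simp
      qed
    qed
    then show ?thesis unfolding rel_rank_def using ex by (simp add: one_enat_def)
  qed
  show ?thesis using rank gen ne by blast
qed

end
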